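(* Let $X$ be a finite discrete space with at least two elements, $\Gamma$ a nonempty countable set, $\varphi:\Gamma\to\Gamma$ any map. Then $(X^\Gamma,\sigma_\varphi)$ is transitive distributional chaotic if and only if $\varphi$ is one-to-one and has no periodic point.
   Context: $X^\Gamma$ has the product topology and a fixed compatible metric $d$; $\sigma_\varphi((x_\alpha)_{\alpha\in\Gamma})=(x_{\varphi(\alpha)})_{\alpha\in\Gamma}$. For $f=\sigma_\varphi$, $x,y\in X^\Gamma$, $t>0$: $\xi(x,y,t,n)=\#\{i\in\{0,\dots,n-1\}:d(f^i(x),f^i(y))<t\}$, $F_{xy}(t)=\liminf_n \xi(x,y,t,n)/n$, $F^*_{xy}(t)=\limsup_n\xi(x,y,t,n)/n$. A point $x$ is a transitive point if $\{f^n(x):n\ge0\}$ is dense. The system is transitive distributional chaotic if there exist a dense uncountable set $A\subseteq X^\Gamma$ consisting of transitive points and $\varepsilon>0$ such that for all distinct $x,y\in A$: $F^*_{xy}(s)=1$ for every $s>0$ and $F_{xy}(\varepsilon)=0$. *)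

theory Defs
  imports "HOL-Analysis.Analysis"
begin

definition prod_discrete :: "('g \<Rightarrow> 'a) topology" where
  "prod_discrete = product_topology (\<lambda>_. discrete_topology (UNIV :: 'a set)) UNIV"

definition sigma_shift :: "('g \<Rightarrow> 'g) \<Rightarrow> ('g \<Rightarrow> 'a) \<Rightarrow> ('g \<Rightarrow> 'a)" where
  "sigma_shift \<phi> x = (\<lambda>\<alpha>. x (\<phi> \<alpha>))"

definition xi_count :: "('b \<Rightarrow> 'b \<Rightarrow> real) \<Rightarrow> ('b \<Rightarrow> 'b) \<Rightarrow> 'b \<Rightarrow> 'b \<Rightarrow> real \<Rightarrow> nat \<Rightarrow> nat" where
  "xi_count d f x y t n = card {i. i < n \<and> d ((f ^^ i) x) ((f ^^ i) y) < t}"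

definition F_lower :: "('b \<Rightarrow> 'b \<Rightarrow> real) \<Rightarrow> ('b \<Rightarrow> 'b) \<Rightarrow> 'b \<Rightarrow> 'b \<Rightarrow> real \<Rightarrow> ereal" where
  "F_lower d f x y t = liminf (\<lambda>n. ereal (real (xi_count d f x y t n) / real n))"

definition F_upper :: "('b \<Rightarrow> 'b \<Rightarrow> real) \<Rightarrow> ('b \<Rightarrow> 'b) \<Rightarrow> 'b \<Rightarrow> 'b \<Rightarrow> real \<Rightarrow> ereal" where
  "F_upper d f x y t = limsup (\<lambda>n. ereal (real (xi_count d f x y t n) / real n))"

definition transitive_point :: "'b topology \<Rightarrow> ('b \<Rightarrow> 'b) \<Rightarrow> 'b \<Rightarrow> bool" where
  "transitive_point T f x \<longleftrightarrow> T closure_of {(f ^^ n) x | n. True} = topspace T"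

definition transitive_distributional_chaotic ::
  "'b topology \<Rightarrow> ('b \<Rightarrow> 'b \<Rightarrow> real) \<Rightarrow> ('b \<Rightarrow> 'b) \<Rightarrow> bool" where
  "transitive_distributional_chaotic T d f \<longleftrightarrow>
     (\<exists>A \<epsilon>. A \<subseteq> topspace T \<and> T closure_of A = topspace T \<and> uncountable A
        \<and> (\<forall>x\<in>A. transitive_point T f x) \<and> \<epsilon> > 0
        \<and> (\<forall>x\<in>A. \<forall>y\<in>A. x \<noteq> y \<longrightarrow>
              (\<forall>s>0. F_upper d f x y s = 1) \<and> F_lower d f x y \<epsilon> = 0))"

definition has_periodic_point :: "('g \<Rightarrow> 'g) \<Rightarrow> bool" where
  "has_periodic_point \<phi> \<longleftrightarrow> (\<exists>\<alpha> n. n > 0 \<and> (\<phi> ^^ n) \<alpha> = \<alpha>)"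

end

theory Submission imports Defs begin

locale chs =
  fixes \<phi> :: "'g::countable \<Rightarrow> 'g" and a b :: "'a::finite"
  assumes injphi: "inj \<phi>" and noper: "\<not> has_periodic_point \<phi>" and ab: "a \<noteq> b"
begin

definition Sm :: "nat \<Rightarrow> 'g set" where "Sm m = {\<gamma>. to_nat \<gamma> < m}"

lemma finite_Sm: "finite (Sm m)"
proof -
  have "Sm m = to_nat -` {..<m}" by (auto simp: Sm_def)
  thus ?thesis by (simp add: finite_vimageI)
qed

lemma Sm_mono: "m \<le> m' \<Longrightarrow> Sm m \<subseteq> Sm m'"
  by (auto simp: Sm_def)

lemma pair_bound: "\<exists>K. \<forall>k>K. (\<phi>^^k) \<gamma>' \<noteq> \<gamma>"
proof (cases "\<exists>k. (\<phi>^^k) \<gamma>' = \<gamma>")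
  case True
  then obtain k0 where k0: "(\<phi>^^k0) \<gamma>' = \<gamma>" by blast
  have "\<forall>k>k0. (\<phi>^^k) \<gamma>' \<noteq> \<gamma>"
  proof (intro allI impI)
    fix k assume "k > k0"
    show "(\<phi>^^k) \<gamma>' \<noteq> \<gamma>"
    proof
      assume h: "(\<phi>^^k) \<gamma>' = \<gamma>"
      have "k = (k-k0) + k0" using \<open>k > k0\<close> by simp
      hence "(\<phi>^^k) \<gamma>' = (\<phi>^^((k-k0) + k0)) \<gamma>'" by simp
      also have "\<dots> = (\<phi>^^(k-k0)) ((\<phi>^^k0) \<gamma>')" by (simp only: funpow_add o_apply)
      finally have "(\<phi>^^k) \<gamma>' = (\<phi>^^(k-k0)) ((\<phi>^^k0) \<gamma>')" .
      hence "(\<phi>^^(k-k0)) \<gamma> = \<gamma>" using h k0 by simp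
      moreover have "k - k0 > 0" using \<open>k > k0\<close> by simp
      ultimately show False using noper unfolding has_periodic_point_def by blast
    qed
  qed
  thus ?thesis by blast
qed auto

lemma sep_finite:
  assumes "finite S"
  shows "\<exists>D. \<forall>i i'. \<forall>\<delta>\<in>S. \<forall>\<delta>'\<in>S. i + D < i' \<longrightarrow> (\<phi>^^i) \<delta> \<noteq> (\<phi>^^i') \<delta>'"
proof -
  have "\<forall>p. \<exists>K. \<forall>k>K. (\<phi>^^k) (snd p) \<noteq> fst p" using pair_bound by blast
  then obtain K where K: "\<And>p k. k > K p \<Longrightarrow> (\<phi>^^k) (snd p) \<noteq> fst p" by metis
  define D where "D = Max (K ` (S \<times> S))"
  have "(\<phi>^^i) \<delta> \<noteq> (\<phi>^^i') \<delta>'" if "\<delta>\<in>S" "\<delta>'\<in>S" "i + D < i'" for i i' \<delta> \<delta>'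
  proof
    assume h: "(\<phi>^^i) \<delta> = (\<phi>^^i') \<delta>'"
    have "i' = i + (i'-i)" using that by simp
    hence "(\<phi>^^i') \<delta>' = (\<phi>^^(i + (i'-i))) \<delta>'" by simp
    also have "\<dots> = (\<phi>^^i) ((\<phi>^^(i'-i)) \<delta>')" by (simp only: funpow_add o_apply)
    finally have "(\<phi>^^i) ((\<phi>^^(i'-i)) \<delta>') = (\<phi>^^i) \<delta>" using h by simp
    hence "(\<phi>^^(i'-i)) \<delta>' = \<delta>" by (rule injD[OF inj_fn[OF injphi]])
    moreover have "K (\<delta>, \<delta>') \<le> D" unfolding D_def
      using that assms by (intro Max_ge) auto
    hence "i' - i > K (\<delta>, \<delta>')" using that by linarith
    ultimately show False using K[of "(\<delta>,\<delta>')" "i'-i"] by simp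
  qed
  thus ?thesis by blast
qed

definition Dm :: "nat \<Rightarrow> nat" where
  "Dm m = (SOME D. \<forall>i i'. \<forall>\<delta>\<in>Sm m. \<forall>\<delta>'\<in>Sm m. i + D < i' \<longrightarrow> (\<phi>^^i) \<delta> \<noteq> (\<phi>^^i') \<delta>')"

lemma sep_m:
  assumes "i + Dm m < i'" "\<delta> \<in> Sm m" "\<delta>' \<in> Sm m"
  shows "(\<phi>^^i) \<delta> \<noteq> (\<phi>^^i') \<delta>'"
proof -
  have "\<forall>i i'. \<forall>\<delta>\<in>Sm m. \<forall>\<delta>'\<in>Sm m. i + Dm m < i' \<longrightarrow> (\<phi>^^i) \<delta> \<noteq> (\<phi>^^i') \<delta>'"
    unfolding Dm_def by (rule someI_ex, rule sep_finite[OF finite_Sm])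
  thus ?thesis using assms by blast
qed

definition G :: "nat \<Rightarrow> nat" where "G m = Dm m + 1"

primrec L :: "nat \<Rightarrow> nat" where
  "L 0 = 0"
| "L (Suc m) = (m + 2) * (L m + 3 * G m + 1)"

lemma L_step: "L m + 3 * G m + 1 \<le> L (Suc m)"
  by simp

lemma L_step2: "(m + 2) * (L m + 2 * G m) \<le> L (Suc m)"
proof -
  have "(m + 2) * (L m + 2 * G m) \<le> (m + 2) * (L m + 3 * G m + 1)"
    by (rule mult_le_mono2) simp
  thus ?thesis by simp
qed

lemma L_mono: "m \<le> m' \<Longrightarrow> L m \<le> L m'"
  by (rule lift_Suc_mono_le[of L]) (use L_step in \<open>force+\<close>)

lemma L_mono2: "m < m' \<Longrightarrow> L (Suc m) \<le> L m'"
  using L_mono[of "Suc m" m'] by simp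

definition tau :: "nat \<Rightarrow> nat" where "tau m = L m + G m"

lemma G_gt: "Dm m < G m" by (simp add: G_def)

lemma tau_unique:
  assumes "\<delta> \<in> Sm m" "\<delta>' \<in> Sm m'" "(\<phi>^^tau m) \<delta> = (\<phi>^^tau m') \<delta>'"
  shows "m = m'"
proof (rule ccontr)
  assume ne: "m \<noteq> m'"
  have *: False if "k < k'" "\<epsilon> \<in> Sm k" "\<epsilon>' \<in> Sm k'" "(\<phi>^^tau k) \<epsilon> = (\<phi>^^tau k') \<epsilon>'" for k k' \<epsilon> \<epsilon>'
  proof -
    have "tau k < L (Suc k)" using L_step[of k] by (simp add: tau_def)
    also have "\<dots> \<le> L k'" using L_mono2[OF \<open>k < k'\<close>] .
    finally have "tau k + Dm k' < tau k'" using G_gt[of k'] by (simp add: tau_def)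
    moreover have "\<epsilon> \<in> Sm k'" using Sm_mono[of k k'] that by auto
    ultimately show False using sep_m[of "tau k" k' "tau k'" \<epsilon> \<epsilon>'] that by auto
  qed
  show False
  proof (cases "m < m'")
    case True thus False using *[of m m' \<delta> \<delta>'] assms by auto
  next
    case False hence "m' < m" using ne by simp
    thus False using *[of m' m \<delta>' \<delta>] assms by auto
  qed
qed

lemma not_tau:
  assumes "\<delta> \<in> Sm m" "L m + 2 * G m \<le> i" "i < L (Suc m)" "\<delta>' \<in> Sm m'"
  shows "(\<phi>^^i) \<delta> \<noteq> (\<phi>^^tau m') \<delta>'"
proof (cases "m' \<le> m")
  case True
  have "tau m' \<le> tau m"
  proof (cases "m' = m")
    case False
    hence "m' < m" using True by simp
    have "tau m' < L (Suc m')" using L_step[of m'] by (simp add: tau_def)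
    also have "\<dots> \<le> L m" using L_mono2[OF \<open>m' < m\<close>] .
    finally show ?thesis by (simp add: tau_def)
  qed simp
  hence "tau m' + Dm m < i" using assms G_gt[of m] by (simp add: tau_def)
  moreover have "\<delta>' \<in> Sm m" using Sm_mono[OF True] assms by auto
  ultimately show ?thesis using sep_m[of "tau m'" m i \<delta>' \<delta>] assms by metis
next
  case False
  hence "m < m'" by simp
  have "i + Dm m' < tau m'" using assms L_mono2[OF \<open>m < m'\<close>] G_gt[of m'] by (simp add: tau_def)
  moreover have "\<delta> \<in> Sm m'" using Sm_mono[of m m'] \<open>m < m'\<close> assms by auto
  ultimately show ?thesis using sep_m[of i m' "tau m'" \<delta> \<delta>'] assms by metis
qed

definition blk :: "(nat \<Rightarrow> bool) \<Rightarrow> nat \<Rightarrow> bool" where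
  "blk \<beta> m \<longleftrightarrow> odd m \<and> \<beta> (fst (prod_decode (m div 2)))"

definition pat :: "nat \<Rightarrow> 'g \<Rightarrow> 'a" where
  "pat m \<delta> = (let p = (from_nat (fst (prod_decode m)) :: 'a list) in
      if to_nat \<delta> < length p then p ! to_nat \<delta> else a)"

definition inB :: "(nat \<Rightarrow> bool) \<Rightarrow> 'g \<Rightarrow> bool" where
  "inB \<beta> \<gamma> \<longleftrightarrow> (\<exists>m i \<delta>. blk \<beta> m \<and> L m + 2 * G m \<le> i \<and> i < L (Suc m) \<and> \<delta> \<in> Sm m \<and> \<gamma> = (\<phi>^^i) \<delta>)"

definition base :: "(nat \<Rightarrow> bool) \<Rightarrow> 'g \<Rightarrow> 'a" where
  "base \<beta> \<gamma> = (if \<exists>m. \<exists>\<delta>\<in>Sm m. \<gamma> = (\<phi>^^tau m) \<delta>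
      then (let m = (SOME m. \<exists>\<delta>\<in>Sm m. \<gamma> = (\<phi>^^tau m) \<delta>) in pat m (inv (\<phi>^^tau m) \<gamma>))
      else if inB \<beta> \<gamma> then b else a)"

lemma base_tau:
  assumes "\<delta> \<in> Sm m"
  shows "base \<beta> ((\<phi>^^tau m) \<delta>) = pat m \<delta>"
proof -
  let ?g = "(\<phi>^^tau m) \<delta>"
  have ex: "\<exists>m'. \<exists>\<delta>'\<in>Sm m'. ?g = (\<phi>^^tau m') \<delta>'" using assms by blast
  define m' where "m' = (SOME m'. \<exists>\<delta>'\<in>Sm m'. ?g = (\<phi>^^tau m') \<delta>')"
  have "\<exists>\<delta>'\<in>Sm m'. ?g = (\<phi>^^tau m') \<delta>'" unfolding m'_def by (rule someI_ex[OF ex])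
  hence "m' = m" using tau_unique assms by metis
  moreover have "inv (\<phi>^^tau m) ?g = \<delta>" using inv_f_f[OF inj_fn[OF injphi]] .
  ultimately show ?thesis unfolding base_def using ex m'_def by (simp add: Let_def)
qed

lemma base_b:
  assumes "\<delta> \<in> Sm m" "L m + 2 * G m \<le> i" "i < L (Suc m)" "blk \<beta> m"
  shows "base \<beta> ((\<phi>^^i) \<delta>) = b"
proof -
  have "\<not> (\<exists>m'. \<exists>\<delta>'\<in>Sm m'. (\<phi>^^i) \<delta> = (\<phi>^^tau m') \<delta>')" using not_tau assms by blast
  moreover have "inB \<beta> ((\<phi>^^i) \<delta>)" unfolding inB_def using assms by blast
  ultimately show ?thesis unfolding base_def by simp
qed

lemma base_a:
  assumes "\<delta> \<in> Sm m" "L m + 2 * G m \<le> i" "i < L (Suc m)" "\<not> blk \<beta> m"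
  shows "base \<beta> ((\<phi>^^i) \<delta>) = a"
proof -
  have "\<not> (\<exists>m'. \<exists>\<delta>'\<in>Sm m'. (\<phi>^^i) \<delta> = (\<phi>^^tau m') \<delta>')" using not_tau assms by blast
  moreover have "\<not> inB \<beta> ((\<phi>^^i) \<delta>)"
  proof
    assume "inB \<beta> ((\<phi>^^i) \<delta>)"
    then obtain m' i' \<delta>' where h: "blk \<beta> m'" "L m' + 2 * G m' \<le> i'" "i' < L (Suc m')" "\<delta>' \<in> Sm m'"
      "(\<phi>^^i) \<delta> = (\<phi>^^i') \<delta>'" unfolding inB_def by blast
    have "m' \<noteq> m" using h assms by auto
    show False
    proof (cases "m' < m")
      case True
      have "i' + Dm m < i" using h assms L_mono2[OF True] G_gt[of m] by linarith
      moreover have "\<delta>' \<in> Sm m" using Sm_mono[of m' m] True h by auto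
      ultimately show False using sep_m[of i' m i \<delta>' \<delta>] h assms by metis
    next
      case False
      hence "m < m'" using \<open>m' \<noteq> m\<close> by simp
      have "i + Dm m' < i'" using h assms L_mono2[OF \<open>m < m'\<close>] G_gt[of m'] by linarith
      moreover have "\<delta> \<in> Sm m'" using Sm_mono[of m m'] \<open>m < m'\<close> assms by auto
      ultimately show False using sep_m[of i m' i' \<delta> \<delta>'] h assms by metis
    qed
  qed
  ultimately show ?thesis unfolding base_def by simp
qed

definition enc :: "'a list \<Rightarrow> (nat \<Rightarrow> bool) \<Rightarrow> nat \<Rightarrow> bool" where
  "enc q \<omega> n = (if even n then \<omega> (n div 2) else n div 2 = to_nat q)"

lemma enc_inj:
  assumes "(q, \<omega>) \<noteq> (q', \<omega>')"
  shows "\<exists>j. enc q \<omega> j \<noteq> enc q' \<omega>' j"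
proof (cases "q = q'")
  case True
  hence "\<omega> \<noteq> \<omega>'" using assms by simp
  then obtain k where "\<omega> k \<noteq> \<omega>' k" by blast
  hence "enc q \<omega> (2*k) \<noteq> enc q' \<omega>' (2*k)" by (simp add: enc_def)
  thus ?thesis by blast
next
  case False
  hence "to_nat q \<noteq> to_nat q'" by (metis from_nat_to_nat)
  hence "enc q \<omega> (2 * to_nat q + 1) \<noteq> enc q' \<omega>' (2 * to_nat q + 1)" by (simp add: enc_def)
  thus ?thesis by blast
qed

definition pt :: "'a list \<Rightarrow> (nat \<Rightarrow> bool) \<Rightarrow> 'g \<Rightarrow> 'a" where
  "pt q \<omega> \<gamma> = (if to_nat \<gamma> < length q then q ! to_nat \<gamma> else base (enc q \<omega>) \<gamma>)"

lemma pt_far: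
  assumes "length q \<le> m" "\<delta> \<in> Sm m" "L m + G m \<le> i"
  shows "pt q \<omega> ((\<phi>^^i) \<delta>) = base (enc q \<omega>) ((\<phi>^^i) \<delta>)"
proof -
  have "\<not> to_nat ((\<phi>^^i) \<delta>) < length q"
  proof
    assume "to_nat ((\<phi>^^i) \<delta>) < length q"
    hence "(\<phi>^^i) \<delta> \<in> Sm m" using assms by (simp add: Sm_def)
    moreover have "0 + Dm m < i" using assms G_gt[of m] by simp
    ultimately have "(\<phi>^^0) ((\<phi>^^i) \<delta>) \<noteq> (\<phi>^^i) \<delta>" using sep_m assms by blast
    thus False by simp
  qed
  thus ?thesis by (simp add: pt_def)
qed

lemma orbit_tau:
  assumes "length q \<le> m" "\<delta> \<in> Sm m"
  shows "pt q \<omega> ((\<phi>^^tau m) \<delta>) = pat m \<delta>"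
  using pt_far[OF assms, of "tau m"] base_tau[OF assms(2)] by (simp add: tau_def)

lemma orbit_b:
  assumes "length q \<le> m" "\<delta> \<in> Sm m" "L m + 2 * G m \<le> i" "i < L (Suc m)" "blk (enc q \<omega>) m"
  shows "pt q \<omega> ((\<phi>^^i) \<delta>) = b"
  using pt_far[OF assms(1,2), of i] base_b[OF assms(2-5)] assms(3) by simp

lemma orbit_a:
  assumes "length q \<le> m" "\<delta> \<in> Sm m" "L m + 2 * G m \<le> i" "i < L (Suc m)" "\<not> blk (enc q \<omega>) m"
  shows "pt q \<omega> ((\<phi>^^i) \<delta>) = a"
  using pt_far[OF assms(1,2), of i] base_a[OF assms(2-5)] assms(3) by simp

lemma bit_even: "even m \<Longrightarrow> \<not> blk \<beta> m" by (simp add: blk_def)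

lemma bit_diff:
  assumes "(q, \<omega>) \<noteq> (q', \<omega>')"
  shows "\<exists>m\<ge>N. blk (enc q \<omega>) m \<noteq> blk (enc q' \<omega>') m"
proof -
  obtain j where j: "enc q \<omega> j \<noteq> enc q' \<omega>' j" using enc_inj[OF assms] by blast
  define m where "m = 2 * prod_encode (j, N) + 1"
  have "m div 2 = prod_encode (j, N)" by (simp add: m_def)
  hence "fst (prod_decode (m div 2)) = j" by simp
  moreover have "odd m" by (simp add: m_def)
  ultimately have "blk (enc q \<omega>) m \<noteq> blk (enc q' \<omega>') m" using j by (simp add: blk_def)
  moreover have "N \<le> m" using le_prod_encode_2[of N j] by (simp add: m_def)
  ultimately show ?thesis by blast
qed

lemma pat_exists:
  "\<exists>m\<ge>N. \<forall>\<delta>. pat m \<delta> = (if to_nat \<delta> < length p then p ! to_nat \<delta> else a)"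
proof -
  define m where "m = prod_encode (to_nat p, N)"
  have "fst (prod_decode m) = to_nat p" by (simp add: m_def)
  hence "\<forall>\<delta>. pat m \<delta> = (if to_nat \<delta> < length p then p ! to_nat \<delta> else a)"
    by (simp add: pat_def)
  moreover have "N \<le> m" using le_prod_encode_2 by (simp add: m_def)
  ultimately show ?thesis by blast
qed

lemma bound_Sm: "finite S \<Longrightarrow> \<exists>N. \<forall>N'\<ge>N. S \<subseteq> Sm N'"
proof -
  assume "finite S"
  hence "finite (to_nat ` S)" by simp
  then obtain k where k: "to_nat ` S \<subseteq> {..<k}" using finite_nat_bounded by blast
  have "S \<subseteq> Sm N'" if "N' \<ge> k" for N'
  proof
    fix x assume "x \<in> S"
    hence "to_nat x < k" using k by auto
    thus "x \<in> Sm N'" using that by (simp add: Sm_def)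
  qed
  thus ?thesis by blast
qed

lemma block_nonempty: "L m + 2 * G m < L (Suc m)"
  using L_step[of m] by simp

lemma block_ratio: "(m + 2) * (L m + 2 * G m) \<le> L (Suc m)"
  by (rule L_step2)

lemma L_ge: "m + 2 \<le> L (Suc m)"
  by simp

end

lemma shift_pow: "((sigma_shift \<phi>)^^i) x = (\<lambda>\<gamma>. x ((\<phi>^^i) \<gamma>))"
proof (induction i arbitrary: x)
  case 0 thus ?case by simp
next
  case (Suc i)
  have "((sigma_shift \<phi>)^^Suc i) x = ((sigma_shift \<phi>)^^i) (sigma_shift \<phi> x)"
    by (simp only: funpow_Suc_right o_apply)
  also have "\<dots> = (\<lambda>\<gamma>. (sigma_shift \<phi> x) ((\<phi>^^i) \<gamma>))" by (rule Suc.IH)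
  also have "\<dots> = (\<lambda>\<gamma>. x ((\<phi>^^Suc i) \<gamma>))" by (simp add: sigma_shift_def)
  finally show ?case .
qed


lemma topspace_pd: "topspace (prod_discrete :: ('g \<Rightarrow> 'a) topology) = UNIV"
  unfolding prod_discrete_def topspace_product_topology topspace_discrete_topology
  by (auto simp: PiE_def extensional_def)

lemma cyl_open:
  assumes "finite S"
  shows "openin prod_discrete {z. \<forall>\<gamma>\<in>S. z \<gamma> = c \<gamma>}"
proof -
  define U where "U = (\<lambda>\<gamma>. if \<gamma> \<in> S then {c \<gamma>} else UNIV)"
  have eq: "{z. \<forall>\<gamma>\<in>S. z \<gamma> = c \<gamma>} = Pi\<^sub>E UNIV U"
    by (auto simp: U_def PiE_def Pi_def extensional_def split: if_splits)
  have "finite {i \<in> UNIV. U i \<noteq> topspace (discrete_topology UNIV)}"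
    by (rule finite_subset[OF _ assms]) (auto simp: U_def)
  hence "openin (product_topology (\<lambda>_. discrete_topology UNIV) UNIV) (Pi\<^sub>E UNIV U)"
    by (simp add: openin_PiE_gen)
  thus ?thesis using eq by (simp add: prod_discrete_def)
qed

lemma cyl_in_open:
  fixes U :: "('g \<Rightarrow> 'a) set"
  assumes "openin prod_discrete U" "c \<in> U"
  shows "\<exists>S. finite S \<and> {z. \<forall>\<gamma>\<in>S. z \<gamma> = c \<gamma>} \<subseteq> U"
proof -
  have "openin (product_topology (\<lambda>_. discrete_topology (UNIV::'a set)) (UNIV::'g set)) U"
    using assms(1) by (simp add: prod_discrete_def)
  hence "\<forall>x\<in>U. \<exists>V. finite {i \<in> UNIV. V i \<noteq> topspace (discrete_topology (UNIV::'a set))} \<and>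
            (\<forall>i\<in>UNIV. openin (discrete_topology UNIV) (V i)) \<and> x \<in> Pi\<^sub>E UNIV V \<and> Pi\<^sub>E UNIV V \<subseteq> U"
    by (simp only: openin_product_topology_alt)
  hence "\<exists>V. finite {i \<in> UNIV. V i \<noteq> topspace (discrete_topology (UNIV::'a set))} \<and>
            (\<forall>i\<in>UNIV. openin (discrete_topology UNIV) (V i)) \<and> c \<in> Pi\<^sub>E UNIV V \<and> Pi\<^sub>E UNIV V \<subseteq> U"
    using assms(2) by (rule bspec)
  then obtain V where V: "finite {i \<in> UNIV. V i \<noteq> topspace (discrete_topology (UNIV::'a set))}"
     "c \<in> Pi\<^sub>E UNIV V" "Pi\<^sub>E UNIV V \<subseteq> U"
    by (elim exE conjE)
  define S where "S = {i. V i \<noteq> UNIV}"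
  have fS: "finite S" using V(1) by (simp add: S_def)
  have sub: "{z. \<forall>\<gamma>\<in>S. z \<gamma> = c \<gamma>} \<subseteq> Pi\<^sub>E UNIV V"
  proof
    fix z assume z: "z \<in> {z. \<forall>\<gamma>\<in>S. z \<gamma> = c \<gamma>}"
    have "z i \<in> V i" for i
    proof (cases "i \<in> S")
      case True
      hence "z i = c i" using z by simp
      moreover have "c i \<in> V i" using V(2) by (simp add: PiE_iff)
      ultimately show ?thesis by simp
    next
      case False thus ?thesis by (simp add: S_def)
    qed
    thus "z \<in> Pi\<^sub>E UNIV V" by (simp add: PiE_iff)
  qed
  have "{z. \<forall>\<gamma>\<in>S. z \<gamma> = c \<gamma>} \<subseteq> U" using sub V(3) by (rule order_trans)
  thus ?thesis using fS by (intro exI[of _ S] conjI)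
qed

lemma dense_cyl:
  fixes A :: "('g \<Rightarrow> 'a) set"
  assumes "\<And>S c. finite S \<Longrightarrow> \<exists>z\<in>A. \<forall>\<gamma>\<in>S. z \<gamma> = c \<gamma>"
  shows "prod_discrete closure_of A = topspace prod_discrete"
  unfolding dense_intersects_open
proof (intro allI impI)
  fix T :: "('g \<Rightarrow> 'a) set" assume T: "openin prod_discrete T \<and> T \<noteq> {}"
  then obtain c where "c \<in> T" by blast
  then obtain S where S: "finite S" "{z. \<forall>\<gamma>\<in>S. z \<gamma> = c \<gamma>} \<subseteq> T" using cyl_in_open T by blast
  then obtain z where "z \<in> A" "\<forall>\<gamma>\<in>S. z \<gamma> = c \<gamma>" using assms by blast
  thus "A \<inter> T \<noteq> {}" using S by blast
qed

lemma dense_hit: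
  fixes A :: "('g \<Rightarrow> 'a) set"
  assumes "prod_discrete closure_of A = topspace prod_discrete" "finite S"
  shows "\<exists>z\<in>A. \<forall>\<gamma>\<in>S. z \<gamma> = c \<gamma>"
proof -
  have "openin prod_discrete {z. \<forall>\<gamma>\<in>S. z \<gamma> = c \<gamma>}" by (rule cyl_open[OF assms(2)])
  moreover have "c \<in> {z. \<forall>\<gamma>\<in>S. z \<gamma> = c \<gamma>}" by simp
  ultimately have "A \<inter> {z. \<forall>\<gamma>\<in>S. z \<gamma> = c \<gamma>} \<noteq> {}"
    using assms(1) unfolding dense_intersects_open by blast
  thus ?thesis by blast
qed

lemma ball_cyl:
  assumes ms: "Metric_space UNIV d" and top: "Metric_space.mtopology UNIV d = prod_discrete" and "s > 0"
  shows "\<exists>S. finite S \<and> (\<forall>z. (\<forall>\<gamma>\<in>S. z \<gamma> = c \<gamma>) \<longrightarrow> d z c < s)"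
proof -
  interpret M: Metric_space UNIV d by (rule ms)
  have "openin M.mtopology (M.mball c s)" by (rule M.openin_mball)
  hence "openin prod_discrete (M.mball c s)" using top by simp
  moreover have "c \<in> M.mball c s" using \<open>s > 0\<close> by simp
  ultimately obtain S where S: "finite S" "{z. \<forall>\<gamma>\<in>S. z \<gamma> = c \<gamma>} \<subseteq> M.mball c s"
    using cyl_in_open by blast
  have "d z c < s" if "\<forall>\<gamma>\<in>S. z \<gamma> = c \<gamma>" for z
    using S(2) that M.commute by auto
  thus ?thesis using S(1) by blast
qed

lemma limsup_one:
  fixes r :: "nat \<Rightarrow> real"
  assumes "\<And>n. r n \<le> 1" "\<And>e N. e > 0 \<Longrightarrow> \<exists>n\<ge>N. r n \<ge> 1 - e"
  shows "limsup (\<lambda>n. ereal (r n)) = 1"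
proof (rule antisym)
  show "limsup (\<lambda>n. ereal (r n)) \<le> 1"
    by (rule Limsup_bounded) (use assms(1) in auto)
  show "1 \<le> limsup (\<lambda>n. ereal (r n))"
  proof (rule ccontr)
    assume "\<not> 1 \<le> limsup (\<lambda>n. ereal (r n))"
    hence "limsup (\<lambda>n. ereal (r n)) < 1" by simp
    then obtain y where y: "limsup (\<lambda>n. ereal (r n)) < ereal y" "ereal y < 1"
      using ereal_dense2 by blast
    have "eventually (\<lambda>n. ereal (r n) < ereal y) sequentially" by (rule Limsup_lessD[OF y(1)])
    then obtain N where N: "\<And>n. n \<ge> N \<Longrightarrow> r n < y" by (auto simp: eventually_sequentially)
    have "y < 1" using y(2) by simp
    then obtain n where "n \<ge> N" "r n \<ge> 1 - (1 - y)" using assms(2)[of "1 - y" N] by auto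
    thus False using N[of n] by simp
  qed
qed

lemma liminf_zero:
  fixes r :: "nat \<Rightarrow> real"
  assumes "\<And>n. r n \<ge> 0" "\<And>e N. e > 0 \<Longrightarrow> \<exists>n\<ge>N. r n \<le> e"
  shows "liminf (\<lambda>n. ereal (r n)) = 0"
proof (rule antisym)
  show "0 \<le> liminf (\<lambda>n. ereal (r n))"
    by (rule Liminf_bounded) (use assms(1) in auto)
  show "liminf (\<lambda>n. ereal (r n)) \<le> 0"
  proof (rule ccontr)
    assume "\<not> liminf (\<lambda>n. ereal (r n)) \<le> 0"
    hence "0 < liminf (\<lambda>n. ereal (r n))" by simp
    then obtain y where y: "0 < ereal y" "ereal y < liminf (\<lambda>n. ereal (r n))"
      using ereal_dense2 by blast
    have "eventually (\<lambda>n. ereal (r n) > ereal y) sequentially" by (rule less_LiminfD[OF y(2)])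
    then obtain N where N: "\<And>n. n \<ge> N \<Longrightarrow> r n > y" by (auto simp: eventually_sequentially)
    have "y > 0" using y(1) by simp
    then obtain n where "n \<ge> N" "r n \<le> y" using assms(2)[of y N] by auto
    thus False using N[of n] by simp
  qed
qed

lemma count_ge:
  assumes "\<And>i. lo \<le> i \<Longrightarrow> i < n \<Longrightarrow> P i"
  shows "n - lo \<le> card {i. i < n \<and> P i}"
proof -
  have "{lo..<n} \<subseteq> {i. i < n \<and> P i}" using assms by auto
  hence "card {lo..<n} \<le> card {i. i < n \<and> P i}" by (rule card_mono[rotated]) auto
  thus ?thesis by simp
qed

lemma count_le:
  assumes "\<And>i. lo \<le> i \<Longrightarrow> i < n \<Longrightarrow> \<not> P i"
  shows "card {i. i < n \<and> P i} \<le> lo"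
proof -
  have "{i. i < n \<and> P i} \<subseteq> {..<lo}" using assms by (auto simp: not_le[symmetric])
  hence "card {i. i < n \<and> P i} \<le> card {..<lo}" by (rule card_mono[rotated]) auto
  thus ?thesis by simp
qed

lemma lo_le:
  assumes "(k + 2) * lo \<le> n" "1 / real (k + 2) \<le> e"
  shows "real lo \<le> e * real n"
proof -
  have "real ((k + 2) * lo) \<le> real n" using assms(1) by (simp only: of_nat_le_iff)
  hence "real (k + 2) * real lo \<le> real n" by (simp only: of_nat_mult)
  hence "real lo \<le> real n / real (k + 2)" by (simp add: pos_le_divide_eq mult.commute)
  also have "\<dots> = real n * (1 / real (k + 2))" by simp
  also have "\<dots> \<le> real n * e" by (rule mult_left_mono[OF assms(2)]) simp
  finally show ?thesis by (simp add: mult.commute)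
qed

lemma ratio_hi:
  assumes "n - lo \<le> c" "(k + 2) * lo \<le> n" "1 / real (k + 2) \<le> e" "n > 0"
  shows "real c / real n \<ge> 1 - e"
proof -
  have "real lo \<le> e * real n" by (rule lo_le[OF assms(2,3)])
  moreover have "lo \<le> (k + 2) * lo" by simp
  hence "lo \<le> n" using assms(2) by linarith
  ultimately have "real n - real c \<le> e * real n" using assms(1) by (simp add: of_nat_diff[symmetric])
  thus ?thesis using assms(4) by (simp add: field_simps)
qed

lemma ratio_lo:
  assumes "c \<le> lo" "(k + 2) * lo \<le> n" "1 / real (k + 2) \<le> e" "e > 0"
  shows "real c / real n \<le> e"
proof (cases "n = 0")
  case True thus ?thesis using assms by simp
next
  case False
  have "real lo \<le> e * real n" by (rule lo_le[OF assms(2,3)])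
  hence "real c \<le> e * real n" using assms(1) by linarith
  thus ?thesis using False by (simp add: field_simps)
qed

lemma uncountable_bool_seq: "uncountable (UNIV :: (nat \<Rightarrow> bool) set)"
proof
  assume "countable (UNIV :: (nat \<Rightarrow> bool) set)"
  then obtain f :: "(nat \<Rightarrow> bool) \<Rightarrow> nat" where f: "inj f" by (auto simp: countable_def)
  define g where "g = (\<lambda>n. \<not> (inv f n) n)"
  have inv_fg: "inv f (f g) = g" using f by simp
  have h1: "g (f g) = (\<not> (inv f (f g)) (f g))" by (simp only: g_def)
  have "g (f g) = (\<not> g (f g))" using h1[unfolded inv_fg] .
  thus False by simp
qed


lemma far:
  assumes ms: "Metric_space UNIV d" and "d z ca < e" "d w cb < e" "d ca cb = 3 * e"
  shows "\<not> d z w < e"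
proof
  interpret M: Metric_space UNIV d by (rule ms)
  assume "d z w < e"
  have "d ca cb \<le> d ca z + d z cb" by (rule M.triangle) auto
  also have "d z cb \<le> d z w + d w cb" by (rule M.triangle) auto
  finally show False using assms M.commute[of ca z] \<open>d z w < e\<close> by linarith
qed

lemma list_pat:
  assumes "\<forall>\<gamma>\<in>S. to_nat \<gamma> < N"
  shows "\<forall>\<gamma>\<in>S. (let p = map (\<lambda>j. c (from_nat j)) [0..<N] in
       if to_nat \<gamma> < length p then p ! to_nat \<gamma> else a) = c \<gamma>"
  using assms by (simp add: Let_def)


context chs
begin

lemma orbit_val: "((sigma_shift \<phi>)^^i) (pt q \<omega>) \<delta> = pt q \<omega> ((\<phi>^^i) \<delta>)"
  by (simp add: shift_pow)

lemma pt_distinct: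
  assumes "(q, \<omega>) \<noteq> (q', \<omega>')"
  shows "pt q \<omega> \<noteq> pt q' \<omega>'"
proof
  assume eq: "pt q \<omega> = pt q' \<omega>'"
  define \<gamma>0 :: 'g where "\<gamma>0 = undefined"
  obtain m where m: "m \<ge> max (max (length q) (length q')) (Suc (to_nat \<gamma>0))"
     "blk (enc q \<omega>) m \<noteq> blk (enc q' \<omega>') m" using bit_diff[OF assms] by blast
  have g: "\<gamma>0 \<in> Sm m" using m(1) by (simp add: Sm_def)
  define i where "i = L m + 2 * G m"
  have i: "L m + 2 * G m \<le> i" "i < L (Suc m)" using block_nonempty by (auto simp: i_def)
  have lq: "length q \<le> m" "length q' \<le> m" using m(1) by auto
  show False
  proof (cases "blk (enc q \<omega>) m")
    case True
    hence "\<not> blk (enc q' \<omega>') m" using m(2) by simp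
    hence "pt q' \<omega>' ((\<phi>^^i) \<gamma>0) = a" using orbit_a[OF lq(2) g i] by simp
    moreover have "pt q \<omega> ((\<phi>^^i) \<gamma>0) = b" using orbit_b[OF lq(1) g i True] .
    ultimately show False using eq ab by simp
  next
    case False
    hence "blk (enc q' \<omega>') m" using m(2) by simp
    hence "pt q' \<omega>' ((\<phi>^^i) \<gamma>0) = b" using orbit_b[OF lq(2) g i] by simp
    moreover have "pt q \<omega> ((\<phi>^^i) \<gamma>0) = a" using orbit_a[OF lq(1) g i False] .
    ultimately show False using eq ab by simp
  qed
qed

lemma pt_dense:
  "prod_discrete closure_of (range (\<lambda>(q, \<omega>). pt q \<omega>)) = topspace prod_discrete"
proof (rule dense_cyl)
  fix S :: "'g set" and c :: "'g \<Rightarrow> 'a"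
  assume "finite S"
  then obtain N where N: "S \<subseteq> Sm N" using bound_Sm by blast
  define q where "q = map (\<lambda>j. c (from_nat j)) [0..<N]"
  have "\<forall>\<gamma>\<in>S. pt q (\<lambda>_. True) \<gamma> = c \<gamma>"
    using N by (auto simp: pt_def q_def Sm_def)
  moreover have "pt q (\<lambda>_. True) \<in> range (\<lambda>(q, \<omega>). pt q \<omega>)" by force
  ultimately show "\<exists>z\<in>range (\<lambda>(q, \<omega>). pt q \<omega>). \<forall>\<gamma>\<in>S. z \<gamma> = c \<gamma>" by blast
qed

lemma pt_transitive: "transitive_point prod_discrete (sigma_shift \<phi>) (pt q \<omega>)"
  unfolding transitive_point_def
proof (rule dense_cyl)
  fix S :: "'g set" and c :: "'g \<Rightarrow> 'a"
  assume "finite S"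
  then obtain N where N: "\<And>N'. N' \<ge> N \<Longrightarrow> S \<subseteq> Sm N'" using bound_Sm by blast
  define p where "p = map (\<lambda>j. c (from_nat j)) [0..<N]"
  obtain m where m: "m \<ge> N + length q"
     "\<forall>\<delta>. pat m \<delta> = (if to_nat \<delta> < length p then p ! to_nat \<delta> else a)"
    using pat_exists by blast
  have SN: "S \<subseteq> Sm N" using N by simp
  have Sm': "S \<subseteq> Sm m" using N m(1) by simp
  have "((sigma_shift \<phi>)^^tau m) (pt q \<omega>) \<gamma> = c \<gamma>" if "\<gamma> \<in> S" for \<gamma>
  proof -
    have "((sigma_shift \<phi>)^^tau m) (pt q \<omega>) \<gamma> = pat m \<gamma>"
      using orbit_val orbit_tau[of q m \<gamma> \<omega>] m(1) Sm' that by auto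
    also have "\<dots> = c \<gamma>" using m(2) SN that by (auto simp: p_def Sm_def)
    finally show ?thesis .
  qed
  thus "\<exists>z\<in>{((sigma_shift \<phi>)^^n) (pt q \<omega>) |n. True}. \<forall>\<gamma>\<in>S. z \<gamma> = c \<gamma>" by blast
qed


lemma exists_K: "e > 0 \<Longrightarrow> \<exists>K. \<forall>m\<ge>K. 1 / real (m + 2) \<le> e"
proof -
  assume "e > 0"
  then obtain n where n: "inverse (real (Suc n)) < e" using reals_Archimedean by blast
  have "1 / real (m + 2) \<le> e" if "m \<ge> n" for m
  proof -
    have "1 / real (m + 2) \<le> 1 / real (Suc n)" using that by (intro divide_left_mono) auto
    thus ?thesis using n by (simp add: inverse_eq_divide)
  qed
  thus ?thesis by blast
qed

lemma ratio_le1: "real (card {i. i < n \<and> P i}) / real n \<le> 1"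
proof -
  have "card {i. i < n \<and> P i} \<le> card {..<n}" by (rule card_mono) auto
  hence "card {i. i < n \<and> P i} \<le> n" by simp
  thus ?thesis by (cases "n = 0") (auto simp: divide_le_eq_1)
qed

lemma pt_upper:
  assumes ms: "Metric_space UNIV d" and top: "Metric_space.mtopology UNIV d = prod_discrete" and "s > 0"
  shows "F_upper d (sigma_shift \<phi>) (pt q \<omega>) (pt q' \<omega>') s = 1"
proof -
  interpret M: Metric_space UNIV d by (rule ms)
  obtain Ss where Ss: "finite Ss" "\<And>z. (\<forall>\<gamma>\<in>Ss. z \<gamma> = a) \<Longrightarrow> d z (\<lambda>_. a) < s / 2"
    using ball_cyl[OF ms top, of "s/2" "\<lambda>_. a"] \<open>s > 0\<close> by auto
  obtain N1 where N1: "\<And>N'. N' \<ge> N1 \<Longrightarrow> Ss \<subseteq> Sm N'" using bound_Sm[OF Ss(1)] by blast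
  let ?x = "pt q \<omega>" and ?y = "pt q' \<omega>'" and ?f = "sigma_shift \<phi>"
  have "limsup (\<lambda>n. ereal (real (card {i. i < n \<and> d ((?f^^i) ?x) ((?f^^i) ?y) < s}) / real n)) = 1"
  proof (rule limsup_one)
    show "\<And>n. real (card {i. i < n \<and> d ((?f^^i) ?x) ((?f^^i) ?y) < s}) / real n \<le> 1"
      by (rule ratio_le1)
    fix e :: real and N :: nat assume "e > 0"
    then obtain K where K: "\<And>m. m \<ge> K \<Longrightarrow> 1 / real (m + 2) \<le> e" using exists_K by blast
    define m where "m = 2 * (N + K + N1 + length q + length q')"
    have ev: "even m" by (simp add: m_def)
    define n where "n = L (Suc m)"
    define lo where "lo = L m + 2 * G m"
    have sub: "Ss \<subseteq> Sm m" using N1 by (simp add: m_def)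
    have good: "d ((?f^^i) ?x) ((?f^^i) ?y) < s" if "lo \<le> i" "i < n" for i
    proof -
      have ax: "((?f^^i) ?x) \<gamma> = a" if "\<gamma> \<in> Ss" for \<gamma>
        using orbit_val orbit_a[of q m \<gamma> i \<omega>] bit_even[OF ev] sub \<open>\<gamma> \<in> Ss\<close> \<open>lo \<le> i\<close> \<open>i < n\<close>
        by (auto simp: m_def n_def lo_def)
      have ay: "((?f^^i) ?y) \<gamma> = a" if "\<gamma> \<in> Ss" for \<gamma>
        using orbit_val orbit_a[of q' m \<gamma> i \<omega>'] bit_even[OF ev] sub \<open>\<gamma> \<in> Ss\<close> \<open>lo \<le> i\<close> \<open>i < n\<close>
        by (auto simp: m_def n_def lo_def)
      have "d ((?f^^i) ?x) (\<lambda>_. a) < s / 2" using Ss(2) ax by blast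
      moreover have "d ((?f^^i) ?y) (\<lambda>_. a) < s / 2" using Ss(2) ay by blast
      moreover have "d ((?f^^i) ?x) ((?f^^i) ?y) \<le> d ((?f^^i) ?x) (\<lambda>_. a) + d (\<lambda>_. a) ((?f^^i) ?y)"
        by (rule M.triangle) auto
      ultimately show ?thesis using M.commute[of "(\<lambda>_. a)" "(?f^^i) ?y"] by linarith
    qed
    have c: "n - lo \<le> card {i. i < n \<and> d ((?f^^i) ?x) ((?f^^i) ?y) < s}"
      by (rule count_ge) (use good in auto)
    have r: "(m + 2) * lo \<le> n" unfolding n_def lo_def by (rule block_ratio)
    have "m \<ge> K" by (simp add: m_def)
    hence e: "1 / real (m + 2) \<le> e" by (rule K)
    have "n \<ge> m + 2" unfolding n_def by (rule L_ge)
    hence "n > 0" "n \<ge> N" by (auto simp: m_def)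
    moreover have "real (card {i. i < n \<and> d ((?f^^i) ?x) ((?f^^i) ?y) < s}) / real n \<ge> 1 - e"
      by (rule ratio_hi[OF c r e \<open>n > 0\<close>])
    ultimately show "\<exists>n\<ge>N. real (card {i. i < n \<and> d ((?f^^i) ?x) ((?f^^i) ?y) < s}) / real n \<ge> 1 - e"
      by blast
  qed
  thus ?thesis by (simp add: F_upper_def xi_count_def)
qed

lemma pt_lower:
  assumes ms: "Metric_space UNIV d" and "e0 > 0"
    and Sa: "finite Sa" "\<And>z. (\<forall>\<gamma>\<in>Sa. z \<gamma> = a) \<Longrightarrow> d z (\<lambda>_. a) < e0"
    and Sb: "finite Sb" "\<And>z. (\<forall>\<gamma>\<in>Sb. z \<gamma> = b) \<Longrightarrow> d z (\<lambda>_. b) < e0"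
    and ab3: "d (\<lambda>_. a) (\<lambda>_. b) = 3 * e0"
    and ne: "(q, \<omega>) \<noteq> (q', \<omega>')"
  shows "F_lower d (sigma_shift \<phi>) (pt q \<omega>) (pt q' \<omega>') e0 = 0"
proof -
  interpret M: Metric_space UNIV d by (rule ms)
  obtain N1 where N1: "\<And>N'. N' \<ge> N1 \<Longrightarrow> Sa \<union> Sb \<subseteq> Sm N'" using bound_Sm[of "Sa \<union> Sb"] Sa Sb by blast
  let ?x = "pt q \<omega>" and ?y = "pt q' \<omega>'" and ?f = "sigma_shift \<phi>"
  have "liminf (\<lambda>n. ereal (real (card {i. i < n \<and> d ((?f^^i) ?x) ((?f^^i) ?y) < e0}) / real n)) = 0"
  proof (rule liminf_zero)
    show "\<And>n. real (card {i. i < n \<and> d ((?f^^i) ?x) ((?f^^i) ?y) < e0}) / real n \<ge> 0"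
      by simp
    fix e :: real and N :: nat assume "e > 0"
    then obtain K where K: "\<And>m. m \<ge> K \<Longrightarrow> 1 / real (m + 2) \<le> e" using exists_K by blast
    obtain m where m: "m \<ge> N + K + N1 + length q + length q'"
        "blk (enc q \<omega>) m \<noteq> blk (enc q' \<omega>') m" using bit_diff[OF ne] by blast
    define n where "n = L (Suc m)"
    define lo where "lo = L m + 2 * G m"
    have sub: "Sa \<subseteq> Sm m" "Sb \<subseteq> Sm m" using N1[of m] m(1) by auto
    have lq: "length q \<le> m" "length q' \<le> m" using m(1) by auto
    have bad: "\<not> d ((?f^^i) ?x) ((?f^^i) ?y) < e0" if "lo \<le> i" "i < n" for i
    proof -
      have i: "L m + 2 * G m \<le> i" "i < L (Suc m)" using that by (auto simp: lo_def n_def)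
      show ?thesis
      proof (cases "blk (enc q \<omega>) m")
        case True
        hence nb: "\<not> blk (enc q' \<omega>') m" using m(2) by simp
        have "((?f^^i) ?x) \<gamma> = b" if "\<gamma> \<in> Sb" for \<gamma>
          using orbit_val orbit_b[OF lq(1) _ i True] sub that by auto
        hence w: "d ((?f^^i) ?x) (\<lambda>_. b) < e0" using Sb(2) by blast
        have "((?f^^i) ?y) \<gamma> = a" if "\<gamma> \<in> Sa" for \<gamma>
          using orbit_val orbit_a[OF lq(2) _ i nb] sub that by auto
        hence z: "d ((?f^^i) ?y) (\<lambda>_. a) < e0" using Sa(2) by blast
        have "\<not> d ((?f^^i) ?y) ((?f^^i) ?x) < e0" using far[OF ms] z w ab3 by blast
        thus ?thesis using M.commute by auto
      next
        case False
        hence nb: "blk (enc q' \<omega>') m" using m(2) by simp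
        have "((?f^^i) ?y) \<gamma> = b" if "\<gamma> \<in> Sb" for \<gamma>
          using orbit_val orbit_b[OF lq(2) _ i nb] sub that by auto
        hence w: "d ((?f^^i) ?y) (\<lambda>_. b) < e0" using Sb(2) by blast
        have "((?f^^i) ?x) \<gamma> = a" if "\<gamma> \<in> Sa" for \<gamma>
          using orbit_val orbit_a[OF lq(1) _ i False] sub that by auto
        hence z: "d ((?f^^i) ?x) (\<lambda>_. a) < e0" using Sa(2) by blast
        show "\<not> d ((?f^^i) ?x) ((?f^^i) ?y) < e0" using far[OF ms] z w ab3 by blast
      qed
    qed
    have c: "card {i. i < n \<and> d ((?f^^i) ?x) ((?f^^i) ?y) < e0} \<le> lo"
      by (rule count_le) (use bad in auto)
    have r: "(m + 2) * lo \<le> n" unfolding n_def lo_def by (rule block_ratio)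
    have "m \<ge> K" using m(1) by simp
    hence e: "1 / real (m + 2) \<le> e" by (rule K)
    have "n \<ge> m + 2" unfolding n_def by (rule L_ge)
    hence "n \<ge> N" using m(1) by simp
    moreover have "real (card {i. i < n \<and> d ((?f^^i) ?x) ((?f^^i) ?y) < e0}) / real n \<le> e"
      by (rule ratio_lo[OF c r e \<open>e > 0\<close>])
    ultimately show "\<exists>n\<ge>N. real (card {i. i < n \<and> d ((?f^^i) ?x) ((?f^^i) ?y) < e0}) / real n \<le> e"
      by blast
  qed
  thus ?thesis by (simp add: F_lower_def xi_count_def)
qed

end




lemma hit_orbit:
  fixes x :: "'g \<Rightarrow> 'a"
  assumes "transitive_point prod_discrete (sigma_shift \<phi>) x" "finite S"
  shows "\<exists>n. \<forall>\<gamma>\<in>S. x ((\<phi>^^n) \<gamma>) = c \<gamma>"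
proof -
  have "prod_discrete closure_of {((sigma_shift \<phi>)^^n) x |n. True} = topspace prod_discrete"
    using assms(1) unfolding transitive_point_def .
  hence "\<exists>z\<in>{((sigma_shift \<phi>)^^n) x |n. True}. \<forall>\<gamma>\<in>S. z \<gamma> = c \<gamma>"
    by (rule dense_hit[OF _ assms(2)])
  then obtain z where z1: "z \<in> {((sigma_shift \<phi>)^^n) x |n. True}" and z2: "\<forall>\<gamma>\<in>S. z \<gamma> = c \<gamma>"
    by (elim bexE)
  from z1 obtain n where "z = ((sigma_shift \<phi>)^^n) x" by auto
  hence "\<forall>\<gamma>\<in>S. x ((\<phi>^^n) \<gamma>) = c \<gamma>" using z2 by (simp add: shift_pow)
  thus ?thesis by (rule exI)
qed

lemma per_reduce:
  assumes "(\<phi>^^p) \<alpha> = \<alpha>" "p > 0"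
  shows "(\<phi>^^k) \<alpha> = (\<phi>^^(k mod p)) \<alpha>"
proof -
  have pq: "(\<phi>^^(p * t)) \<alpha> = \<alpha>" for t
  proof (induction t)
    case 0 thus ?case by simp
  next
    case (Suc t)
    have "p * Suc t = p + p * t" by simp
    hence "(\<phi>^^(p * Suc t)) \<alpha> = (\<phi>^^(p + p * t)) \<alpha>" by simp
    also have "\<dots> = (\<phi>^^p) ((\<phi>^^(p * t)) \<alpha>)" by (simp only: funpow_add o_apply)
    finally have "(\<phi>^^(p * Suc t)) \<alpha> = (\<phi>^^p) ((\<phi>^^(p * t)) \<alpha>)" .
    thus ?case using Suc assms by simp
  qed
  have "k = k mod p + p * (k div p)" by simp
  hence "(\<phi>^^k) \<alpha> = (\<phi>^^(k mod p + p * (k div p))) \<alpha>" by metis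
  also have "\<dots> = (\<phi>^^(k mod p)) ((\<phi>^^(p * (k div p))) \<alpha>)" by (simp only: funpow_add o_apply)
  finally show ?thesis using pq by simp
qed

lemma mod_fix:
  assumes "(p::nat) > 0"
  shows "(n + (p - n mod p + k) mod p) mod p = k mod p"
proof -
  have "(n + (p - n mod p + k) mod p) mod p = (n + (p - n mod p + k)) mod p"
    by (simp add: mod_add_right_eq)
  also have "n + (p - n mod p + k) = p * (n div p + 1) + k"
  proof -
    have "n mod p < p" using assms by simp
    moreover have "n = p * (n div p) + n mod p" by simp
    moreover have "p * (n div p + 1) = p * (n div p) + p" by simp
    ultimately show ?thesis by linarith
  qed
  also have "(p * (n div p + 1) + k) mod p = (k + (n div p + 1) * p) mod p" by (simp add: algebra_simps)
  also have "\<dots> = k mod p" by (rule mod_mult_self1)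
  finally show ?thesis .
qed

lemma tdc_imp:
  fixes \<phi> :: "'g \<Rightarrow> 'g" and d :: "('g \<Rightarrow> 'a) \<Rightarrow> ('g \<Rightarrow> 'a) \<Rightarrow> real" and a b :: 'a
  assumes "transitive_distributional_chaotic prod_discrete d (sigma_shift \<phi>)" "a \<noteq> b"
  shows "inj \<phi> \<and> \<not> has_periodic_point \<phi>"
proof -
  obtain A e where A0: "A \<subseteq> topspace prod_discrete" "prod_discrete closure_of A = topspace prod_discrete"
     "uncountable A" "\<forall>x\<in>A. transitive_point prod_discrete (sigma_shift \<phi>) x" "e > 0"
     "\<forall>x\<in>A. \<forall>y\<in>A. x \<noteq> y \<longrightarrow> (\<forall>s>0. F_upper d (sigma_shift \<phi>) x y s = 1) \<and> F_lower d (sigma_shift \<phi>) x y e = 0"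
    using assms(1) unfolding transitive_distributional_chaotic_def by (elim exE conjE) (rule that)
  have A: "uncountable A" "\<forall>x\<in>A. transitive_point prod_discrete (sigma_shift \<phi>) x"
    using A0(3) A0(4) by auto
  have "A \<noteq> {}"
  proof
    assume "A = {}"
    thus False using A(1) by simp
  qed
  then obtain x where "x \<in> A" unfolding ex_in_conv[symmetric] by (elim exE)
  hence tp: "transitive_point prod_discrete (sigma_shift \<phi>) x" using A(2) by blast
  have inj: "inj \<phi>"
  proof (rule injI, rule ccontr)
    fix \<alpha> \<beta> assume eq: "\<phi> \<alpha> = \<phi> \<beta>" and ne: "\<alpha> \<noteq> \<beta>"
    have same: "(\<phi>^^n) \<alpha> = (\<phi>^^n) \<beta>" if "n > 0" for n
    proof -
      obtain k where "n = Suc k" using \<open>n > 0\<close> gr0_implies_Suc by blast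
      thus ?thesis using eq by (simp only: funpow_Suc_right o_apply)
    qed
    have key: "x \<alpha> = u \<and> x \<beta> = v" if "u \<noteq> v" for u v
    proof -
      have "\<exists>n. \<forall>\<gamma>\<in>{\<alpha>, \<beta>}. x ((\<phi>^^n) \<gamma>) = (\<lambda>\<gamma>. if \<gamma> = \<alpha> then u else v) \<gamma>"
        by (rule hit_orbit[OF tp]) simp
      then obtain n where n: "\<forall>\<gamma>\<in>{\<alpha>, \<beta>}. x ((\<phi>^^n) \<gamma>) = (\<lambda>\<gamma>. if \<gamma> = \<alpha> then u else v) \<gamma>"
        by (elim exE)
      hence "x ((\<phi>^^n) \<alpha>) = u" "x ((\<phi>^^n) \<beta>) = v" using ne by auto
      moreover have "n = 0"
      proof (rule ccontr)
        assume "n \<noteq> 0"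
        hence "(\<phi>^^n) \<alpha> = (\<phi>^^n) \<beta>" using same by simp
        thus False using \<open>x ((\<phi>^^n) \<alpha>) = u\<close> \<open>x ((\<phi>^^n) \<beta>) = v\<close> that by simp
      qed
      ultimately show ?thesis by simp
    qed
    show False using key[OF assms(2)] key[of b a] assms(2) by auto
  qed
  have np: "\<not> has_periodic_point \<phi>"
  proof
    assume "has_periodic_point \<phi>"
    then obtain \<alpha> p where p: "p > 0" "(\<phi>^^p) \<alpha> = \<alpha>" unfolding has_periodic_point_def by blast
    have "\<exists>n. \<forall>\<gamma>\<in>(\<lambda>j. (\<phi>^^j) \<alpha>) ` {..<p}. x ((\<phi>^^n) \<gamma>) = (\<lambda>_. a) \<gamma>"
      by (rule hit_orbit[OF tp]) simp
    then obtain n where n: "\<forall>\<gamma>\<in>(\<lambda>j. (\<phi>^^j) \<alpha>) ` {..<p}. x ((\<phi>^^n) \<gamma>) = (\<lambda>_. a) \<gamma>"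
      by (elim exE)
    have alla: "x ((\<phi>^^k) \<alpha>) = a" for k
    proof -
      define j where "j = (p - n mod p + k) mod p"
      have "j < p" using p by (simp add: j_def)
      hence "x ((\<phi>^^n) ((\<phi>^^j) \<alpha>)) = a" using n by auto
      moreover have "(\<phi>^^n) ((\<phi>^^j) \<alpha>) = (\<phi>^^(n + j)) \<alpha>" by (simp only: funpow_add o_apply)
      moreover have "(\<phi>^^(n + j)) \<alpha> = (\<phi>^^((n + j) mod p)) \<alpha>" by (rule per_reduce[OF p(2) p(1)])
      moreover have "(n + j) mod p = k mod p" unfolding j_def by (rule mod_fix[OF p(1)])
      moreover have "(\<phi>^^k) \<alpha> = (\<phi>^^(k mod p)) \<alpha>" by (rule per_reduce[OF p(2) p(1)])
      ultimately show ?thesis by simp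
    qed
    have "\<exists>n'. \<forall>\<gamma>\<in>{\<alpha>}. x ((\<phi>^^n') \<gamma>) = (\<lambda>_. b) \<gamma>"
      by (rule hit_orbit[OF tp]) simp
    then obtain n' where "\<forall>\<gamma>\<in>{\<alpha>}. x ((\<phi>^^n') \<gamma>) = (\<lambda>_. b) \<gamma>"
      by (elim exE)
    thus False using alla[of n'] assms(2) by simp
  qed
  show ?thesis using inj np by blast
qed

theorem theorem5p4:
  fixes \<phi> :: "'g::countable \<Rightarrow> 'g"
    and d :: "('g \<Rightarrow> 'a::finite) \<Rightarrow> ('g \<Rightarrow> 'a) \<Rightarrow> real"
  assumes "CARD('a) \<ge> 2"
    and "Metric_space UNIV d"
    and "Metric_space.mtopology UNIV d = prod_discrete"
  shows "transitive_distributional_chaotic prod_discrete d (sigma_shift \<phi>)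
           \<longleftrightarrow> inj \<phi> \<and> \<not> has_periodic_point \<phi>"
proof -
  obtain a b :: 'a where ab: "a \<noteq> b"
  proof -
    obtain a :: 'a where True by blast
    have "\<exists>b. b \<noteq> a"
    proof (rule ccontr)
      assume "\<not> (\<exists>b. b \<noteq> a)"
      hence "(UNIV :: 'a set) = {a}" by auto
      hence "card (UNIV :: 'a set) = card {a}" by (rule arg_cong)
      thus False using assms(1) by simp
    qed
    thus ?thesis using that by blast
  qed
  show ?thesis
  proof
    assume "transitive_distributional_chaotic prod_discrete d (sigma_shift \<phi>)"
    thus "inj \<phi> \<and> \<not> has_periodic_point \<phi>" by (rule tdc_imp[OF _ ab])
  next
    assume h: "inj \<phi> \<and> \<not> has_periodic_point \<phi>"
    interpret C: chs \<phi> a b using h ab by unfold_locales auto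
    interpret M: Metric_space UNIV d by (rule assms(2))
    define A where "A = range (\<lambda>(q, \<omega>). C.pt q \<omega>)"
    have memA: "\<exists>q \<omega>. x = C.pt q \<omega>" if "x \<in> A" for x
    proof -
      from that obtain p where "x = (\<lambda>(q, \<omega>). C.pt q \<omega>) p" unfolding A_def by (rule rangeE)
      thus ?thesis by (cases p) auto
    qed
    have "(\<lambda>_. a) \<noteq> (\<lambda>_::'g. b)"
    proof
      assume "(\<lambda>_. a) = (\<lambda>_::'g. b)"
      hence "(\<lambda>_. a) (undefined::'g) = (\<lambda>_::'g. b) undefined" by (rule arg_cong)
      thus False using ab by simp
    qed
    hence "d (\<lambda>_. a) (\<lambda>_. b) \<noteq> 0" using M.zero[of "\<lambda>_. a" "\<lambda>_. b"] by simp
    hence dpos: "d (\<lambda>_. a) (\<lambda>_. b) > 0" using M.nonneg[of "\<lambda>_. a" "\<lambda>_. b"] by (simp add: order_less_le)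
    define e0 where "e0 = d (\<lambda>_. a) (\<lambda>_. b) / 3"
    have e0: "e0 > 0" using dpos by (simp add: e0_def)
    have ab3: "d (\<lambda>_. a) (\<lambda>_. b) = 3 * e0" by (simp add: e0_def)
    have "\<exists>S. finite S \<and> (\<forall>z. (\<forall>\<gamma>\<in>S. z \<gamma> = a) \<longrightarrow> d z (\<lambda>_. a) < e0)"
      using ball_cyl[OF assms(2,3) e0, of "\<lambda>_. a"] by simp
    then obtain Sa where Sa: "finite Sa" "\<forall>z. (\<forall>\<gamma>\<in>Sa. z \<gamma> = a) \<longrightarrow> d z (\<lambda>_. a) < e0"
      by (elim exE conjE)
    have "\<exists>S. finite S \<and> (\<forall>z. (\<forall>\<gamma>\<in>S. z \<gamma> = b) \<longrightarrow> d z (\<lambda>_. b) < e0)"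
      using ball_cyl[OF assms(2,3) e0, of "\<lambda>_. b"] by simp
    then obtain Sb where Sb: "finite Sb" "\<forall>z. (\<forall>\<gamma>\<in>Sb. z \<gamma> = b) \<longrightarrow> d z (\<lambda>_. b) < e0"
      by (elim exE conjE)
    have injp: "inj (\<lambda>\<omega>. C.pt [] \<omega>)"
    proof (rule injI)
      fix \<omega> \<omega>' assume eq: "C.pt [] \<omega> = C.pt [] \<omega>'"
      show "\<omega> = \<omega>'"
      proof (rule ccontr)
        assume "\<omega> \<noteq> \<omega>'"
        hence "([], \<omega>) \<noteq> ([], \<omega>')" by simp
        thus False using C.pt_distinct eq by blast
      qed
    qed
    have unc: "uncountable A"
    proof
      assume cA: "countable A"
      have "range (\<lambda>\<omega>. C.pt [] \<omega>) \<subseteq> A" unfolding A_def by auto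
      hence "countable (range (\<lambda>\<omega>. C.pt [] \<omega>))" using cA by (rule countable_subset)
      hence "countable (UNIV :: (nat \<Rightarrow> bool) set)" by (rule countable_image_inj_on[OF _ injp])
      thus False using uncountable_bool_seq by simp
    qed
    have big: "A \<subseteq> topspace prod_discrete \<and> prod_discrete closure_of A = topspace prod_discrete \<and> uncountable A
        \<and> (\<forall>x\<in>A. transitive_point prod_discrete (sigma_shift \<phi>) x) \<and> e0 > 0
        \<and> (\<forall>x\<in>A. \<forall>y\<in>A. x \<noteq> y \<longrightarrow>
              (\<forall>s>0. F_upper d (sigma_shift \<phi>) x y s = 1) \<and> F_lower d (sigma_shift \<phi>) x y e0 = 0)"
    proof (intro conjI)
      show "A \<subseteq> topspace prod_discrete" by (simp add: topspace_pd)
      show "prod_discrete closure_of A = topspace prod_discrete" unfolding A_def by (rule C.pt_dense)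
      show "uncountable A" by (rule unc)
      show "\<forall>x\<in>A. transitive_point prod_discrete (sigma_shift \<phi>) x"
      proof
        fix x assume "x \<in> A"
        then obtain q \<omega> where "x = C.pt q \<omega>" using memA by blast
        thus "transitive_point prod_discrete (sigma_shift \<phi>) x" using C.pt_transitive by simp
      qed
      show "e0 > 0" by (rule e0)
      show "\<forall>x\<in>A. \<forall>y\<in>A. x \<noteq> y \<longrightarrow>
              (\<forall>s>0. F_upper d (sigma_shift \<phi>) x y s = 1) \<and> F_lower d (sigma_shift \<phi>) x y e0 = 0"
      proof (intro ballI impI conjI allI)
        fix x y assume x: "x \<in> A" and y: "y \<in> A" and "x \<noteq> y"
        obtain q \<omega> where xq: "x = C.pt q \<omega>" using memA x by blast
        obtain q' \<omega>' where yq: "y = C.pt q' \<omega>'" using memA y by blast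
        have ne: "(q, \<omega>) \<noteq> (q', \<omega>')" using \<open>x \<noteq> y\<close> xq yq by auto
        show "F_upper d (sigma_shift \<phi>) x y s = 1" if "s > 0" for s
          using C.pt_upper[OF assms(2,3) that] xq yq by simp
        show "F_lower d (sigma_shift \<phi>) x y e0 = 0"
          using C.pt_lower[OF assms(2) e0 Sa(1) Sa(2)[rule_format] Sb(1) Sb(2)[rule_format] ab3 ne] xq yq
          by simp
      qed
    qed
    show "transitive_distributional_chaotic prod_discrete d (sigma_shift \<phi>)"
      unfolding transitive_distributional_chaotic_def
      apply (rule exI[of _ A])
      apply (rule exI[of _ e0])
      by (rule big)
  qed
qed

end
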